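(* For every restriction category $\mathbb{X}$, the category $\mathbf{L}[\mathbb{X}]$ with the assignment $\mathsf{L}(A,a)=(A,\mathrm{id}_A)$ and $\eta_{(A,a)}=a:(A,a)\to(A,\mathrm{id}_A)$ is a local category.
   Context: Composition is diagrammatic ($fg$ = first $f$ then $g$). A restriction category is a category $\mathbb{X}$ with an assignment to each $f:A\to B$ of $\bar f:A\to A$ such that: $\bar ff=f$; $\bar f\bar g=\bar g\bar f$ and $\bar g\bar f=\overline{\bar gf}$ for $f:A\to B$, $g:A\to C$; $f\bar g=\overline{fg}f$ for $f:A\to B$, $g:B\to C$. A restriction idempotent is $a:A\to A$ with $a=\bar a$. $\mathbf{L}[\mathbb{X}]$ is the category whose objects are pairs $(A,a)$ with $a$ a restriction idempotent on $A$, whose morphisms $f:(A,a)\to(B,b)$ are morphisms $f:A\to B$ of $\mathbb{X}$ with $\bar f=a$ and $fb=f$, with identity on $(A,a)$ given by $a$ and composition as in $\mathbb{X}$. A local category is a category $\mathbb{C}$ with, for each object $M$, an object $\mathsf{L}M$ and a morphism $\eta_M:M\to\mathsf{L}M$ such that (L.1) $\mathsf{L}\mathsf{L}M=\mathsf{L}M$ and $\eta_{\mathsf{L}M}=\mathrm{id}_{\mathsf{L}M}$; (L.2) each $\eta_M$ is monic; (L.3) for every $M$ and every morphism $f:N\to\mathsf{L}M$ a pullback of $\eta_M$ along $f$ exists, with leg $m:P\to N$, such that $\mathsf{L}P=\mathsf{L}N$ and $m\eta_N=\eta_P$. *)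

theory Defs
  imports Main
begin

text \<open>Categories presented by hom-sets (arrows may lie in several hom-sets, which
  is needed for L[X] where a morphism (A,a) -> (B,b) is an X-arrow f with
  conditions depending on the typing).  Composition is diagrammatic:
  cat_comp C f g means first f then g.\<close>

record ('o, 'm) cat =
  cat_obj  :: "'o set"
  cat_hom  :: "'o \<Rightarrow> 'o \<Rightarrow> 'm set"
  cat_id   :: "'o \<Rightarrow> 'm"
  cat_comp :: "'m \<Rightarrow> 'm \<Rightarrow> 'm"

definition category :: "('o, 'm) cat \<Rightarrow> bool" where
  "category C \<longleftrightarrow>
     (\<forall>A B f. f \<in> cat_hom C A B \<longrightarrow> A \<in> cat_obj C \<and> B \<in> cat_obj C) \<and>
     (\<forall>A \<in> cat_obj C. cat_id C A \<in> cat_hom C A A) \<and>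
     (\<forall>A B D f g. f \<in> cat_hom C A B \<longrightarrow> g \<in> cat_hom C B D \<longrightarrow>
        cat_comp C f g \<in> cat_hom C A D) \<and>
     (\<forall>A B D E f g h. f \<in> cat_hom C A B \<longrightarrow> g \<in> cat_hom C B D \<longrightarrow> h \<in> cat_hom C D E \<longrightarrow>
        cat_comp C (cat_comp C f g) h = cat_comp C f (cat_comp C g h)) \<and>
     (\<forall>A B f. f \<in> cat_hom C A B \<longrightarrow>
        cat_comp C (cat_id C A) f = f \<and> cat_comp C f (cat_id C B) = f)"

definition restriction_category :: "('o, 'm) cat \<Rightarrow> ('m \<Rightarrow> 'm) \<Rightarrow> bool" where
  "restriction_category X rst \<longleftrightarrow> category X \<and>
     (\<forall>A B f. f \<in> cat_hom X A B \<longrightarrow> rst f \<in> cat_hom X A A) \<and>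
     (\<forall>A B f. f \<in> cat_hom X A B \<longrightarrow> cat_comp X (rst f) f = f) \<and>
     (\<forall>A B D f g. f \<in> cat_hom X A B \<longrightarrow> g \<in> cat_hom X A D \<longrightarrow>
        cat_comp X (rst f) (rst g) = cat_comp X (rst g) (rst f) \<and>
        cat_comp X (rst g) (rst f) = rst (cat_comp X (rst g) f)) \<and>
     (\<forall>A B D f g. f \<in> cat_hom X A B \<longrightarrow> g \<in> cat_hom X B D \<longrightarrow>
        cat_comp X f (rst g) = cat_comp X (rst (cat_comp X f g)) f)"

definition Lcat :: "('o, 'm) cat \<Rightarrow> ('m \<Rightarrow> 'm) \<Rightarrow> ('o \<times> 'm, 'm) cat" where
  "Lcat X rst =
    (let Ob = {(A, a). A \<in> cat_obj X \<and> a \<in> cat_hom X A A \<and> rst a = a} in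
     \<lparr> cat_obj = Ob,
       cat_hom = (\<lambda>(A, a) (B, b). {f. (A, a) \<in> Ob \<and> (B, b) \<in> Ob \<and> f \<in> cat_hom X A B
                                       \<and> rst f = a \<and> cat_comp X f b = f}),
       cat_id = (\<lambda>(A, a). a),
       cat_comp = cat_comp X \<rparr>)"

definition monic :: "('o, 'm) cat \<Rightarrow> 'o \<Rightarrow> 'o \<Rightarrow> 'm \<Rightarrow> bool" where
  "monic C M N e \<longleftrightarrow> e \<in> cat_hom C M N \<and>
     (\<forall>P g h. g \<in> cat_hom C P M \<longrightarrow> h \<in> cat_hom C P M \<longrightarrow>
        cat_comp C g e = cat_comp C h e \<longrightarrow> g = h)"

definition is_pullback ::
  "('o, 'm) cat \<Rightarrow> 'o \<Rightarrow> 'o \<Rightarrow> 'o \<Rightarrow> 'm \<Rightarrow> 'm \<Rightarrow> 'o \<Rightarrow> 'm \<Rightarrow> 'm \<Rightarrow> bool" where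
  "is_pullback C M N K e f P m n \<longleftrightarrow>
     P \<in> cat_obj C \<and> m \<in> cat_hom C P N \<and> n \<in> cat_hom C P M \<and>
     cat_comp C m f = cat_comp C n e \<and>
     (\<forall>Q x y. x \<in> cat_hom C Q N \<longrightarrow> y \<in> cat_hom C Q M \<longrightarrow>
        cat_comp C x f = cat_comp C y e \<longrightarrow>
        (\<exists>!u. u \<in> cat_hom C Q P \<and> cat_comp C u m = x \<and> cat_comp C u n = y))"

definition local_category :: "('o, 'm) cat \<Rightarrow> ('o \<Rightarrow> 'o) \<Rightarrow> ('o \<Rightarrow> 'm) \<Rightarrow> bool" where
  "local_category C L \<eta> \<longleftrightarrow> category C \<and>
     (\<forall>M \<in> cat_obj C. L M \<in> cat_obj C \<and> \<eta> M \<in> cat_hom C M (L M)) \<and>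
     \<comment> \<open>(L.1)\<close>
     (\<forall>M \<in> cat_obj C. L (L M) = L M \<and> \<eta> (L M) = cat_id C (L M)) \<and>
     \<comment> \<open>(L.2)\<close>
     (\<forall>M \<in> cat_obj C. monic C M (L M) (\<eta> M)) \<and>
     \<comment> \<open>(L.3)\<close>
     (\<forall>M \<in> cat_obj C. \<forall>N \<in> cat_obj C. \<forall>f. f \<in> cat_hom C N (L M) \<longrightarrow>
        (\<exists>P m n. is_pullback C M N (L M) (\<eta> M) f P m n \<and>
                 L P = L N \<and> cat_comp C m (\<eta> N) = \<eta> P))"

end

theory Submission
  imports Defs
begin

lemma Lcat_obj: "cat_obj (Lcat X rst) = {(A, a). A \<in> cat_obj X \<and> a \<in> cat_hom X A A \<and> rst a = a}"
  by (simp add: Lcat_def Let_def)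

lemma Lcat_hom: "f \<in> cat_hom (Lcat X rst) (A, a) (B, b) \<longleftrightarrow>
   (A \<in> cat_obj X \<and> a \<in> cat_hom X A A \<and> rst a = a) \<and> (B \<in> cat_obj X \<and> b \<in> cat_hom X B B \<and> rst b = b)
   \<and> f \<in> cat_hom X A B \<and> rst f = a \<and> cat_comp X f b = f"
  by (simp add: Lcat_def Let_def)

lemma Lcat_id: "cat_id (Lcat X rst) (A, a) = a"
  by (simp add: Lcat_def Let_def)

lemma Lcat_comp: "cat_comp (Lcat X rst) = cat_comp X"
  by (simp add: Lcat_def Let_def)

locale rc =
  fixes X :: "('o, 'm) cat" and rst :: "'m \<Rightarrow> 'm"
  assumes rc: "restriction_category X rst"
begin

abbreviation cp (infixl "\<cdot>" 70) where "f \<cdot> g \<equiv> cat_comp X f g"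

lemma homobj: "f \<in> cat_hom X A B \<Longrightarrow> A \<in> cat_obj X \<and> B \<in> cat_obj X"
  using rc unfolding restriction_category_def category_def by (elim conjE) fast
lemma idh: "A \<in> cat_obj X \<Longrightarrow> cat_id X A \<in> cat_hom X A A"
  using rc unfolding restriction_category_def category_def by (elim conjE) simp
lemma comph: "f \<in> cat_hom X A B \<Longrightarrow> g \<in> cat_hom X B D \<Longrightarrow> f \<cdot> g \<in> cat_hom X A D"
  using rc unfolding restriction_category_def category_def by (elim conjE) simp
lemma assoc: "f \<in> cat_hom X A B \<Longrightarrow> g \<in> cat_hom X B D \<Longrightarrow> h \<in> cat_hom X D E \<Longrightarrow>
   (f \<cdot> g) \<cdot> h = f \<cdot> (g \<cdot> h)"
  using rc unfolding restriction_category_def category_def by (elim conjE) simp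
lemma idl: "f \<in> cat_hom X A B \<Longrightarrow> cat_id X A \<cdot> f = f"
  using rc unfolding restriction_category_def category_def by (elim conjE) simp
lemma idr: "f \<in> cat_hom X A B \<Longrightarrow> f \<cdot> cat_id X B = f"
  using rc unfolding restriction_category_def category_def by (elim conjE) simp
lemma rh: "f \<in> cat_hom X A B \<Longrightarrow> rst f \<in> cat_hom X A A"
  using rc unfolding restriction_category_def by (elim conjE) simp
lemma R1: "f \<in> cat_hom X A B \<Longrightarrow> rst f \<cdot> f = f"
  using rc unfolding restriction_category_def by (elim conjE) simp
lemma R2: "f \<in> cat_hom X A B \<Longrightarrow> g \<in> cat_hom X A D \<Longrightarrow> rst f \<cdot> rst g = rst g \<cdot> rst f"
  using rc unfolding restriction_category_def by (elim conjE) fast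
lemma R3: "f \<in> cat_hom X A B \<Longrightarrow> g \<in> cat_hom X A D \<Longrightarrow> rst g \<cdot> rst f = rst (rst g \<cdot> f)"
  using rc unfolding restriction_category_def by (elim conjE) fast
lemma R4: "f \<in> cat_hom X A B \<Longrightarrow> g \<in> cat_hom X B D \<Longrightarrow> f \<cdot> rst g = rst (f \<cdot> g) \<cdot> f"
  using rc unfolding restriction_category_def by (elim conjE) simp

lemma rst_id: "A \<in> cat_obj X \<Longrightarrow> rst (cat_id X A) = cat_id X A"
  by (metis R1 idh idr rh)

lemma rst_rst: "f \<in> cat_hom X A B \<Longrightarrow> rst (rst f) = rst f"
proof -
  assume f: "f \<in> cat_hom X A B"
  have "rst (rst f) \<cdot> rst f = rst f" using R1[OF rh[OF f]] .
  moreover have "rst f \<cdot> rst (rst f) = rst (rst f \<cdot> rst f)" using R3[OF rh[OF f] f] .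
  moreover have "rst f \<cdot> rst f = rst f" using R3[OF f f] R1[OF f] by simp
  moreover have "rst f \<cdot> rst (rst f) = rst (rst f) \<cdot> rst f" using R2[OF f rh[OF f]] .
  ultimately show ?thesis by simp
qed

lemma idem: "a \<in> cat_hom X A A \<Longrightarrow> rst a = a \<Longrightarrow> a \<cdot> a = a"
  by (metis R1)

lemma rst_le: "f \<in> cat_hom X A B \<Longrightarrow> g \<in> cat_hom X B D \<Longrightarrow> rst (f \<cdot> g) \<cdot> rst f = rst (f \<cdot> g)"
proof -
  assume f: "f \<in> cat_hom X A B" and g: "g \<in> cat_hom X B D"
  have fg: "f \<cdot> g \<in> cat_hom X A D" using comph[OF f g] .
  have "rst (f \<cdot> g) \<cdot> rst f = rst f \<cdot> rst (f \<cdot> g)" using R2[OF fg f] .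
  also have "\<dots> = rst (rst f \<cdot> (f \<cdot> g))" using R3[OF fg f] .
  also have "rst f \<cdot> (f \<cdot> g) = f \<cdot> g" using assoc[OF rh[OF f] f g] R1[OF f] by simp
  finally show ?thesis by simp
qed

lemma rst_comp: "f \<in> cat_hom X A B \<Longrightarrow> g \<in> cat_hom X B D \<Longrightarrow> f \<cdot> rst g = f \<Longrightarrow> rst (f \<cdot> g) = rst f"
proof -
  assume f: "f \<in> cat_hom X A B" and g: "g \<in> cat_hom X B D" and e: "f \<cdot> rst g = f"
  have fg: "f \<cdot> g \<in> cat_hom X A D" using comph[OF f g] .
  have "rst (f \<cdot> g) \<cdot> f = f" using R4[OF f g] e by simp
  hence "rst f = rst (rst (f \<cdot> g) \<cdot> f)" by simp
  also have "\<dots> = rst (f \<cdot> g) \<cdot> rst f" using R3[OF f fg] by simp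
  also have "\<dots> = rst (f \<cdot> g)" using rst_le[OF f g] .
  finally show ?thesis by simp
qed

end

theorem proposition4p3:
  fixes X :: "('o, 'm) cat" and rst :: "'m \<Rightarrow> 'm"
  assumes "restriction_category X rst"
  shows "local_category (Lcat X rst) (\<lambda>(A, a). (A, cat_id X A)) (\<lambda>(A, a). a)"
proof -
  interpret rc X rst using assms by unfold_locales
  let ?C = "Lcat X rst"
  have cat: "category ?C"
    unfolding category_def
  proof (intro conjI allI impI ballI)
    fix A B f assume "f \<in> cat_hom ?C A B"
    then show "A \<in> cat_obj ?C" and "B \<in> cat_obj ?C"
      by ((cases A; cases B; simp add: Lcat_hom Lcat_obj))+
  next
    fix A assume "A \<in> cat_obj ?C"
    then show "cat_id ?C A \<in> cat_hom ?C A A"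
      by (cases A; auto simp: Lcat_hom Lcat_obj Lcat_id idem)
  next
    fix A B D f g assume "f \<in> cat_hom ?C A B" "g \<in> cat_hom ?C B D"
    then show "cat_comp ?C f g \<in> cat_hom ?C A D"
      apply (cases A; cases B; cases D)
      apply (clarsimp simp: Lcat_hom Lcat_comp)
      apply (intro conjI)
        apply (erule (1) comph)
       apply (rule rst_comp; assumption)
      apply (metis assoc)
      done
  next
    fix A B D E f g h assume "f \<in> cat_hom ?C A B" "g \<in> cat_hom ?C B D" "h \<in> cat_hom ?C D E"
    then show "cat_comp ?C (cat_comp ?C f g) h = cat_comp ?C f (cat_comp ?C g h)"
      by (cases A; cases B; cases D; cases E; auto simp: Lcat_hom Lcat_comp intro: assoc)
  next
    fix A B f assume "f \<in> cat_hom ?C A B"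
    then show "cat_comp ?C (cat_id ?C A) f = f" and "cat_comp ?C f (cat_id ?C B) = f"
      by ((cases A; cases B; auto simp: Lcat_hom Lcat_comp Lcat_id R1))+
  qed
  show ?thesis
    unfolding local_category_def
  proof (intro conjI ballI allI impI)
    show "category ?C" by (rule cat)
  next
    fix M assume "M \<in> cat_obj ?C"
    then show "(case M of (A, a) \<Rightarrow> (A, cat_id X A)) \<in> cat_obj ?C" and
      "(case M of (A, a) \<Rightarrow> a) \<in> cat_hom ?C M (case M of (A, a) \<Rightarrow> (A, cat_id X A))"
      by ((cases M; auto simp: Lcat_hom Lcat_obj idh rst_id idr))+
  next
    fix M assume "M \<in> cat_obj ?C"
    then show "(case case M of (A, a) \<Rightarrow> (A, cat_id X A) of (A, a) \<Rightarrow> (A, cat_id X A)) =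
       (case M of (A, a) \<Rightarrow> (A, cat_id X A))" and
       "(case case M of (A, a) \<Rightarrow> (A, cat_id X A) of (A, a) \<Rightarrow> a) =
       cat_id ?C (case M of (A, a) \<Rightarrow> (A, cat_id X A))"
      by ((cases M; auto simp: Lcat_id))+
  next
    fix M assume "M \<in> cat_obj ?C"
    then show "monic ?C M (case M of (A, a) \<Rightarrow> (A, cat_id X A)) (case M of (A, a) \<Rightarrow> a)"
      unfolding monic_def
      apply (cases M)
      apply (clarsimp simp: Lcat_hom Lcat_obj Lcat_comp idh rst_id idr)
      done
  next
    fix M N f
    assume M: "M \<in> cat_obj ?C" and N: "N \<in> cat_obj ?C"
      and f: "f \<in> cat_hom ?C N (case M of (A, a) \<Rightarrow> (A, cat_id X A))"
    obtain A a where Ma: "M = (A, a)" by (cases M)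
    obtain B b where Nb: "N = (B, b)" by (cases N)
    from f M N have A: "A \<in> cat_obj X" and a: "a \<in> cat_hom X A A" "rst a = a"
      and B: "B \<in> cat_obj X" and b: "b \<in> cat_hom X B B" "rst b = b"
      and fh: "f \<in> cat_hom X B A" and rf: "rst f = b"
      by (auto simp: Ma Nb Lcat_hom Lcat_obj)
    have aa: "a \<cdot> a = a" using idem a by blast
    have fa: "f \<cdot> a \<in> cat_hom X B A" using comph[OF fh a(1)] .
    define e where "e = rst (f \<cdot> a)"
    have eh: "e \<in> cat_hom X B B" unfolding e_def using rh[OF fa] .
    have ee: "rst e = e" unfolding e_def using rst_rst[OF fa] .
    have eb: "e \<cdot> b = e" unfolding e_def using rst_le[OF fh a(1)] rf by simp
    have Pobj: "(B, e) \<in> cat_obj ?C" using B eh ee by (simp add: Lcat_obj)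
    have mh: "e \<in> cat_hom ?C (B, e) N"
      using Pobj B b eh ee eb by (simp add: Lcat_hom Lcat_obj Nb)
    have nh: "f \<cdot> a \<in> cat_hom ?C (B, e) M"
      using Pobj A a fa assoc[OF fh a(1) a(1)] aa by (simp add: Lcat_hom Lcat_obj Ma e_def)
    have comm: "e \<cdot> f = (f \<cdot> a) \<cdot> a"
      using R4[OF fh a(1)] a(2) assoc[OF fh a(1) a(1)] aa by (simp add: e_def)
    have pb: "is_pullback ?C M N (A, cat_id X A) a f (B, e) e (f \<cdot> a)"
      unfolding is_pullback_def
    proof (intro conjI allI impI)
      show "(B, e) \<in> cat_obj ?C" by (rule Pobj)
      show "e \<in> cat_hom ?C (B, e) N" by (rule mh)
      show "f \<cdot> a \<in> cat_hom ?C (B, e) M" by (rule nh)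
      show "cat_comp ?C e f = cat_comp ?C (f \<cdot> a) a" using comm by (simp add: Lcat_comp)
    next
      fix Q x y
      assume x: "x \<in> cat_hom ?C Q N" and y: "y \<in> cat_hom ?C Q M"
        and xy: "cat_comp ?C x f = cat_comp ?C y a"
      obtain C c where Qc: "Q = (C, c)" by (cases Q)
      from x y have xh: "x \<in> cat_hom X C B" and rx: "rst x = c" and xb: "x \<cdot> b = x"
        and yh: "y \<in> cat_hom X C A" and ry: "rst y = c" and ya: "y \<cdot> a = y"
        and Qo: "C \<in> cat_obj X" "c \<in> cat_hom X C C" "rst c = c"
        by (auto simp: Qc Nb Ma Lcat_hom)
      have xf: "x \<cdot> f = y" using xy ya by (simp add: Lcat_comp)
      have xfa: "x \<cdot> (f \<cdot> a) = y" using assoc[OF xh fh a(1)] xf ya by simp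
      have xe: "x \<cdot> e = x"
        unfolding e_def using R4[OF xh fa] xfa ry rx R1[OF xh] by simp
      have uh: "x \<in> cat_hom ?C Q (B, e)"
        using x xh rx xe Pobj by (simp add: Qc Nb Lcat_hom Lcat_obj)
      show "\<exists>!u. u \<in> cat_hom ?C Q (B, e) \<and> cat_comp ?C u e = x \<and> cat_comp ?C u (f \<cdot> a) = y"
      proof (rule ex1I[where a = x])
        show "x \<in> cat_hom ?C Q (B, e) \<and> cat_comp ?C x e = x \<and> cat_comp ?C x (f \<cdot> a) = y"
          using uh xe xfa by (simp add: Lcat_comp)
      next
        fix u assume "u \<in> cat_hom ?C Q (B, e) \<and> cat_comp ?C u e = x \<and> cat_comp ?C u (f \<cdot> a) = y"
        then show "u = x" by (auto simp: Qc Lcat_hom Lcat_comp)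
      qed
    qed
    show "\<exists>P m n. is_pullback ?C M N (case M of (A, a) \<Rightarrow> (A, cat_id X A)) (case M of (A, a) \<Rightarrow> a) f P m n \<and>
        (case P of (A, a) \<Rightarrow> (A, cat_id X A)) = (case N of (A, a) \<Rightarrow> (A, cat_id X A)) \<and>
        cat_comp ?C m (case N of (A, a) \<Rightarrow> a) = (case P of (A, a) \<Rightarrow> a)"
      apply (rule exI[where x = "(B, e)"], rule exI[where x = e], rule exI[where x = "f \<cdot> a"])
      using pb eb by (simp add: Ma Nb Lcat_comp)
  qed
qed

end
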